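(* Let $Fa$ and $Fb$ be two distinct points of $\mathrm{PG}(n-1,q)$ ($a,b\in L^*$), and let $\ell$ be the line joining them. Put $m=[F(ab^{-1}):F]$, the degree of the field extension of $F$ generated by $ab^{-1}$. Then $j(\ell)$ is the image of an $(m-1)$-uple embedding.
   Context: Let $q$ be a prime power, $F=\mathbb F_q$, $n\ge 2$ an integer, and $L=\mathbb F_{q^n}\supseteq F$. Regard $L$ as an $n$-dimensional $F$-vector space; $\mathrm{PG}(n-1,q)$ denotes the projective space whose points are the one-dimensional $F$-subspaces $Fx$, $x\in L^*$, and whose lines are the two-dimensional $F$-subspaces (identified with their sets of points). Define $j:\mathrm{PG}(n-1,q)\to\mathrm{PG}(n-1,q)$ by $j(Fx)=Fx^{-1}$. For an integer $r\ge1$, a set $X$ of points of a projective space $\mathrm{PG}(V)$ over $F$ is called the image of an $r$-uple embedding if there is an injective $F$-linear map $\phi:F^{r+1}\to V$ such that $X=\{F\,\phi(t_0^r,t_0^{r-1}t_1,\dots,t_0t_1^{r-1},t_1^r):(t_0,t_1)\in F^2\setminus\{(0,0)\}\}$. *)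

theory Defs
  imports Main
begin

definition subfield :: "'a::field set \<Rightarrow> bool" where
  "subfield K \<longleftrightarrow> 0 \<in> K \<and> 1 \<in> K \<and> (\<forall>x\<in>K. \<forall>y\<in>K. x + y \<in> K \<and> x * y \<in> K)
     \<and> (\<forall>x\<in>K. - x \<in> K \<and> inverse x \<in> K)"

definition gen_field :: "'a::field set \<Rightarrow> 'a \<Rightarrow> 'a set" where
  "gen_field F c = \<Inter>{K. subfield K \<and> F \<subseteq> K \<and> c \<in> K}"

definition has_dim :: "'a::field set \<Rightarrow> 'a set \<Rightarrow> nat \<Rightarrow> bool" where
  "has_dim F K m \<longleftrightarrow> (\<exists>bs. length bs = m \<and> set bs \<subseteq> K \<and>
     (\<forall>y\<in>K. \<exists>!cs. length cs = m \<and> set cs \<subseteq> F \<and> y = sum_list (map2 (*) cs bs)))"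

definition pt :: "'a::field set \<Rightarrow> 'a \<Rightarrow> 'a set" where
  "pt F x = {c * x | c. c \<in> F}"

definition points :: "'a::field set \<Rightarrow> 'a set set" where
  "points F = {pt F x | x. x \<noteq> 0}"

definition join_line :: "'a::field set \<Rightarrow> 'a \<Rightarrow> 'a \<Rightarrow> 'a set set" where
  "join_line F a b = {pt F x | x. x \<noteq> 0 \<and> (\<exists>c\<in>F. \<exists>d\<in>F. x = c * a + d * b)}"

definition jmap :: "'a::field set \<Rightarrow> 'a set \<Rightarrow> 'a set" where
  "jmap F P = pt F (inverse (SOME x. x \<noteq> 0 \<and> P = pt F x))"

text \<open>Image of an r-uple embedding into PG(V), V = the whole field viewed as F-space.
  F^(r+1) is modelled as functions nat => 'a with values in F on {0..r} and 0 elsewhere.\<close>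
definition coord_space :: "'a::field set \<Rightarrow> nat \<Rightarrow> (nat \<Rightarrow> 'a) set" where
  "coord_space F r = {s. (\<forall>i\<le>r. s i \<in> F) \<and> (\<forall>i>r. s i = 0)}"

definition F_linear_on :: "'a::field set \<Rightarrow> nat \<Rightarrow> ((nat \<Rightarrow> 'a) \<Rightarrow> 'a) \<Rightarrow> bool" where
  "F_linear_on F r \<phi> \<longleftrightarrow>
     (\<forall>s\<in>coord_space F r. \<forall>t\<in>coord_space F r. \<phi> (\<lambda>i. s i + t i) = \<phi> s + \<phi> t) \<and>
     (\<forall>c\<in>F. \<forall>s\<in>coord_space F r. \<phi> (\<lambda>i. c * s i) = c * \<phi> s)"

definition veronese :: "nat \<Rightarrow> 'a::field \<Rightarrow> 'a \<Rightarrow> nat \<Rightarrow> 'a" where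
  "veronese r t0 t1 = (\<lambda>i. if i \<le> r then t0 ^ (r - i) * t1 ^ i else 0)"

definition is_ruple_image :: "'a::field set \<Rightarrow> nat \<Rightarrow> 'a set set \<Rightarrow> bool" where
  "is_ruple_image F r X \<longleftrightarrow>
     (\<exists>\<phi>. F_linear_on F r \<phi> \<and> inj_on \<phi> (coord_space F r) \<and>
        X = {pt F (\<phi> (veronese r t0 t1)) | t0 t1. t0 \<in> F \<and> t1 \<in> F \<and> (t0, t1) \<noteq> (0, 0)})"

end

theory Submission
  imports Defs
begin


lemma sf_0: "subfield F \<Longrightarrow> 0 \<in> F" by (simp add: subfield_def)
lemma sf_1: "subfield F \<Longrightarrow> 1 \<in> F" by (simp add: subfield_def)
lemma sf_add: "subfield F \<Longrightarrow> x \<in> F \<Longrightarrow> y \<in> F \<Longrightarrow> x + y \<in> F" by (simp add: subfield_def)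
lemma sf_mult: "subfield F \<Longrightarrow> x \<in> F \<Longrightarrow> y \<in> F \<Longrightarrow> x * y \<in> F" by (simp add: subfield_def)
lemma sf_uminus: "subfield F \<Longrightarrow> x \<in> F \<Longrightarrow> - x \<in> F" by (simp add: subfield_def)
lemma sf_inverse: "subfield F \<Longrightarrow> x \<in> F \<Longrightarrow> inverse x \<in> F" by (simp add: subfield_def)
lemma sf_diff: "subfield F \<Longrightarrow> x \<in> F \<Longrightarrow> y \<in> F \<Longrightarrow> x - y \<in> F"
  by (metis diff_conv_add_uminus sf_add sf_uminus)
lemma sf_divide: "subfield F \<Longrightarrow> x \<in> F \<Longrightarrow> y \<in> F \<Longrightarrow> x / y \<in> F"
  by (metis divide_inverse sf_mult sf_inverse)
lemma sf_power: "subfield F \<Longrightarrow> x \<in> F \<Longrightarrow> x ^ k \<in> F"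
  by (induction k) (auto simp: sf_1 sf_mult)

lemma sum_closed:
  assumes "finite A" "0 \<in> W" "\<And>x y. x \<in> W \<Longrightarrow> y \<in> W \<Longrightarrow> x + y \<in> W"
    "\<And>i. i \<in> A \<Longrightarrow> f i \<in> W"
  shows "sum f A \<in> W"
  using assms(1,4) by (induction A rule: finite_induct) (auto simp: assms(2,3))

definition Sk :: "'a::field set \<Rightarrow> nat \<Rightarrow> (nat \<Rightarrow> 'a) set" where
  "Sk F k = {\<sigma>. (\<forall>i<k. \<sigma> i \<in> F) \<and> (\<forall>i\<ge>k. \<sigma> i = 0)}"

definition lin :: "(nat \<Rightarrow> 'a::field) \<Rightarrow> nat \<Rightarrow> (nat \<Rightarrow> 'a) \<Rightarrow> 'a" where
  "lin g k \<sigma> = (\<Sum>i<k. \<sigma> i * g i)"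

lemma coord_Sk: "coord_space F r = Sk F (Suc r)"
  unfolding coord_space_def Sk_def by (auto simp: less_Suc_eq_le)

lemma card_Sk:
  assumes "finite F"
  shows "card (Sk F k) = card F ^ k"
proof -
  have "bij_betw (\<lambda>\<sigma>. map \<sigma> [0..<k]) (Sk F k) {xs. set xs \<subseteq> F \<and> length xs = k}"
  proof (rule bij_betwI')
    fix x y assume "x \<in> Sk F k" "y \<in> Sk F k"
    then show "(map x [0..<k] = map y [0..<k]) = (x = y)"
      unfolding Sk_def by (auto simp: map_eq_conv fun_eq_iff)
  next
    fix x assume "x \<in> Sk F k" then show "map x [0..<k] \<in> {xs. set xs \<subseteq> F \<and> length xs = k}"
      unfolding Sk_def by auto
  next
    fix xs assume xs: "xs \<in> {xs. set xs \<subseteq> F \<and> length xs = k}"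
    let ?s = "\<lambda>i. if i < k then xs ! i else 0"
    have "?s \<in> Sk F k" using xs unfolding Sk_def by auto
    moreover have "xs = map ?s [0..<k]" using xs by (auto intro: nth_equalityI)
    ultimately show "\<exists>x\<in>Sk F k. xs = map x [0..<k]" by blast
  qed
  then show ?thesis using bij_betw_same_card card_lists_length_eq[OF assms] by metis
qed

lemma finite_Sk: "finite F \<Longrightarrow> finite (Sk F k)"
proof -
  assume f: "finite F"
  have "Sk F k \<subseteq> (\<lambda>xs i. if i < k then xs ! i else 0) ` {xs. set xs \<subseteq> F \<and> length xs = k}"
  proof
    fix s assume s: "s \<in> Sk F k"
    have "s = (\<lambda>i. if i < k then map s [0..<k] ! i else 0)" using s unfolding Sk_def by auto
    moreover have "map s [0..<k] \<in> {xs. set xs \<subseteq> F \<and> length xs = k}" using s unfolding Sk_def by auto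
    ultimately show "s \<in> (\<lambda>xs i. if i < k then xs ! i else 0) ` {xs. set xs \<subseteq> F \<and> length xs = k}" by blast
  qed
  then show ?thesis using finite_lists_length_eq[OF f] finite_surj by blast
qed

lemma Sk_add: "subfield F \<Longrightarrow> s \<in> Sk F k \<Longrightarrow> t \<in> Sk F k \<Longrightarrow> (\<lambda>i. s i + t i) \<in> Sk F k"
  unfolding Sk_def by (auto simp: sf_add)
lemma Sk_smult: "subfield F \<Longrightarrow> c \<in> F \<Longrightarrow> s \<in> Sk F k \<Longrightarrow> (\<lambda>i. c * s i) \<in> Sk F k"
  unfolding Sk_def by (auto simp: sf_mult)
lemma Sk_zero: "subfield F \<Longrightarrow> (\<lambda>i. 0) \<in> Sk F k"
  unfolding Sk_def by (auto simp: sf_0)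
lemma Sk_unit: "subfield F \<Longrightarrow> j < k \<Longrightarrow> (\<lambda>i. if i = j then 1 else 0) \<in> Sk F k"
  unfolding Sk_def by (auto simp: sf_0 sf_1)

lemma lin_add: "lin g k (\<lambda>i. s i + t i) = lin g k s + lin g k t"
  unfolding lin_def by (simp add: distrib_right sum.distrib)
lemma lin_smult: "lin g k (\<lambda>i. c * s i) = c * lin g k s"
  unfolding lin_def by (simp add: sum_distrib_left mult.assoc)
lemma lin_zero: "lin g k (\<lambda>i. 0) = 0"
  unfolding lin_def by simp
lemma lin_unit: "j < k \<Longrightarrow> lin g k (\<lambda>i. if i = j then 1 else 0) = g j"
proof -
  assume j: "j < k"
  have eq: "(\<lambda>i. (if i = j then 1 else 0) * g i) = (\<lambda>i. if i = j then g j else 0)" by auto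
  show ?thesis unfolding lin_def eq using j by (simp add: sum.delta)
qed

lemma span_add: "subfield F \<Longrightarrow> x \<in> lin g k ` Sk F k \<Longrightarrow> y \<in> lin g k ` Sk F k \<Longrightarrow> x + y \<in> lin g k ` Sk F k"
  by (auto simp: lin_add[symmetric] intro!: imageI Sk_add)
lemma span_smult: "subfield F \<Longrightarrow> c \<in> F \<Longrightarrow> x \<in> lin g k ` Sk F k \<Longrightarrow> c * x \<in> lin g k ` Sk F k"
  by (auto simp: lin_smult[symmetric] intro!: imageI Sk_smult)
lemma span_zero: "subfield F \<Longrightarrow> 0 \<in> lin g k ` Sk F k"
  by (metis lin_zero Sk_zero imageI)
lemma span_gen: "subfield F \<Longrightarrow> j < k \<Longrightarrow> g j \<in> lin g k ` Sk F k"
  by (metis lin_unit Sk_unit imageI)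
lemma span_sum: "subfield F \<Longrightarrow> finite A \<Longrightarrow> (\<And>i. i \<in> A \<Longrightarrow> f i \<in> lin g k ` Sk F k) \<Longrightarrow> sum f A \<in> lin g k ` Sk F k"
  by (rule sum_closed) (auto simp: span_zero span_add)

lemma subfield_sum: "subfield K \<Longrightarrow> finite A \<Longrightarrow> (\<And>i. i \<in> A \<Longrightarrow> f i \<in> K) \<Longrightarrow> sum f A \<in> K"
  by (rule sum_closed) (auto simp: sf_0 sf_add)

lemma lin_in: "subfield K \<Longrightarrow> F \<subseteq> K \<Longrightarrow> (\<And>i. i < k \<Longrightarrow> g i \<in> K) \<Longrightarrow> s \<in> Sk F k \<Longrightarrow> lin g k s \<in> K"
  unfolding lin_def Sk_def by (rule subfield_sum) (auto intro!: sf_mult)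

lemma pt_scale: assumes "subfield F" "l \<in> F" "l \<noteq> 0" shows "pt F (l * x) = pt F x"
proof -
  have "c * (l * x) \<in> pt F x" if "c \<in> F" for c
    using that assms unfolding pt_def by (auto intro!: exI[of _ "c*l"] sf_mult)
  moreover have "c * x \<in> pt F (l * x)" if "c \<in> F" for c
    using that assms unfolding pt_def
    by (auto intro!: exI[of _ "c * inverse l"] sf_mult sf_inverse)
  ultimately show ?thesis unfolding pt_def by blast
qed

lemma jmap_pt: assumes "subfield F" "x \<noteq> 0" shows "jmap F (pt F x) = pt F (inverse x)"
proof -
  define y where "y = (SOME y. y \<noteq> 0 \<and> pt F x = pt F y)"
  have y: "y \<noteq> 0 \<and> pt F x = pt F y" unfolding y_def by (rule someI[of _ x]) (use assms in auto)
  have "x \<in> pt F x" unfolding pt_def using sf_1[OF assms(1)] by force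
  then have "x \<in> pt F y" using y by simp
  then obtain l where l: "l \<in> F" "x = l * y" unfolding pt_def by auto
  then have "l \<noteq> 0" using assms by auto
  have "inverse y = l * inverse x" using l \<open>l \<noteq> 0\<close> y by (simp add: field_simps)
  moreover have "pt F (l * inverse x) = pt F (inverse x)" using pt_scale assms l \<open>l \<noteq> 0\<close> by blast
  ultimately have "pt F (inverse y) = pt F (inverse x)" by simp
  then show ?thesis unfolding jmap_def y_def[symmetric] by simp
qed


lemma gen_field_mem: "x \<in> gen_field F c \<longleftrightarrow> (\<forall>K. subfield K \<and> F \<subseteq> K \<and> c \<in> K \<longrightarrow> x \<in> K)"
  unfolding gen_field_def by blast
lemma gen_field_F: "F \<subseteq> gen_field F c" and gen_field_c: "c \<in> gen_field F c"
  by (auto simp: gen_field_mem)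
lemma gen_field_subfield: "subfield (gen_field F c)"
proof -
  let ?G = "gen_field F c"
  have "0 \<in> ?G" "1 \<in> ?G" by (auto simp: gen_field_mem sf_0 sf_1)
  moreover have "x + y \<in> ?G \<and> x * y \<in> ?G" if "x \<in> ?G" "y \<in> ?G" for x y
    using that by (auto simp: gen_field_mem intro: sf_add sf_mult)
  moreover have "- x \<in> ?G \<and> inverse x \<in> ?G" if "x \<in> ?G" for x
    using that by (auto simp: gen_field_mem intro: sf_uminus sf_inverse)
  ultimately show ?thesis unfolding subfield_def by blast
qed
lemma gen_field_min: "subfield V \<Longrightarrow> F \<subseteq> V \<Longrightarrow> c \<in> V \<Longrightarrow> gen_field F c \<subseteq> V"
  by (auto simp: gen_field_mem)

lemma sumlist_in: "subfield K \<Longrightarrow> set xs \<subseteq> K \<Longrightarrow> set ys \<subseteq> K \<Longrightarrow> sum_list (map2 (*) xs ys) \<in> K"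
proof (induction xs arbitrary: ys)
  case Nil then show ?case by (simp add: sf_0)
next
  case (Cons x xs) then show ?case
    by (cases ys) (auto simp: sf_0 sf_add sf_mult)
qed
lemma card_has_dim:
  assumes "subfield K" "F \<subseteq> K" "has_dim F K m" "finite F"
  shows "card K = card F ^ m"
proof -
  obtain bs where bs: "length bs = m" "set bs \<subseteq> K"
    "\<forall>y\<in>K. \<exists>!cs. length cs = m \<and> set cs \<subseteq> F \<and> y = sum_list (map2 (*) cs bs)"
    using assms(3) unfolding has_dim_def by (elim exE conjE) (intro that)
  let ?f = "\<lambda>cs. sum_list (map2 (*) cs bs)"
  let ?L = "{xs. set xs \<subseteq> F \<and> length xs = m}"
  have sub: "?f ` ?L \<subseteq> K"
  proof
    fix y assume "y \<in> ?f ` ?L"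
    then obtain cs where "cs \<in> ?L" "y = ?f cs" by blast
    then show "y \<in> K" using sumlist_in[OF assms(1), of cs bs] bs(2) assms(2) by auto
  qed
  have "K \<subseteq> ?f ` ?L"
  proof
    fix y assume y: "y \<in> K"
    obtain cs where "length cs = m \<and> set cs \<subseteq> F \<and> y = ?f cs" using ex1_implies_ex[OF bspec[OF bs(3) y]] by blast
    then show "y \<in> ?f ` ?L" by auto
  qed
  then have img: "?f ` ?L = K" using sub by blast
  have inj: "inj_on ?f ?L"
  proof (rule inj_onI)
    fix x y assume x: "x \<in> ?L" and y: "y \<in> ?L" and e: "?f x = ?f y"
    have "?f x \<in> K" using sub x by blast
    from bspec[OF bs(3) this] obtain z where
      "\<And>cs. length cs = m \<and> set cs \<subseteq> F \<and> ?f x = ?f cs \<Longrightarrow> cs = z" by (elim ex1E) blast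
    then have "x = z" "y = z" using x y e by auto
    then show "x = y" by simp
  qed
  have "card K = card ?L" using card_image[OF inj] img by simp
  then show ?thesis using card_lists_length_eq[OF assms(4)] by simp
qed

lemma powers_basis:
  fixes F :: "'a::{field,finite} set"
  assumes sF: "subfield F" and dim: "has_dim F (gen_field F c) m" and dd: "d = - c"
  shows "1 \<le> m \<and> inj_on (lin (\<lambda>i. d^i) m) (Sk F m) \<and> lin (\<lambda>i. d^i) m ` Sk F m = gen_field F c
         \<and> (\<exists>\<gamma>\<in>Sk F m. d^m = lin (\<lambda>i. d^i) m \<gamma>)"
proof -
  define K where "K = gen_field F c"
  define P where "P = (\<lambda>i::nat. d^i)"
  have sK: "subfield K" and FK: "F \<subseteq> K" and cK: "c \<in> K"
    unfolding K_def by (auto simp: gen_field_subfield gen_field_F gen_field_c)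
  have dK: "d \<in> K" using dd cK sK sf_uminus by blast
  have fin: "finite F" "finite K" by auto
  have cardK: "card K = card F ^ m" using card_has_dim[OF sK FK _ fin(1)] dim K_def by simp
  have "card {0, 1::'a} \<le> card F" using sf_0[OF sF] sf_1[OF sF] by (intro card_mono) auto
  then have cF2: "1 < card F" by simp
  have img_sub: "lin P k ` Sk F k \<subseteq> K" for k
    using lin_in[OF sK FK] sf_power[OF sK dK] unfolding P_def by blast
  have ninj: "\<not> inj_on (lin P (Suc m)) (Sk F (Suc m))"
  proof
    assume i: "inj_on (lin P (Suc m)) (Sk F (Suc m))"
    have "card (Sk F (Suc m)) = card (lin P (Suc m) ` Sk F (Suc m))" using card_image[OF i] by simp
    also have "\<dots> \<le> card K" using img_sub by (intro card_mono) auto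
    finally have "card F ^ Suc m \<le> card F ^ m" using card_Sk[OF fin(1)] cardK by simp
    then show False using cF2 by simp
  qed
  define k0 where "k0 = (LEAST k. \<not> inj_on (lin P (Suc k)) (Sk F (Suc k)))"
  have ninj0: "\<not> inj_on (lin P (Suc k0)) (Sk F (Suc k0))"
    unfolding k0_def using ninj by (rule LeastI)
  have inj0: "inj_on (lin P k0) (Sk F k0)"
  proof (cases k0)
    case 0
    have "Sk F 0 \<subseteq> {\<lambda>i. 0}" unfolding Sk_def by auto
    then show ?thesis using 0 unfolding inj_on_def by blast
  next
    case (Suc j)
    then have "j < k0" by simp
    then have "\<not> \<not> inj_on (lin P (Suc j)) (Sk F (Suc j))"
      using not_less_Least[of j "\<lambda>k. \<not> inj_on (lin P (Suc k)) (Sk F (Suc k))"] unfolding k0_def by blast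
    then show ?thesis using Suc by simp
  qed
  obtain \<sigma> \<tau> where st: "\<sigma> \<in> Sk F (Suc k0)" "\<tau> \<in> Sk F (Suc k0)" "\<sigma> \<noteq> \<tau>"
    "lin P (Suc k0) \<sigma> = lin P (Suc k0) \<tau>"
    using ninj0 unfolding inj_on_def by blast
  have linS: "lin P (Suc k0) s = lin P k0 s + s k0 * P k0" for s
    unfolding lin_def by simp
  have neq: "\<sigma> k0 \<noteq> \<tau> k0"
  proof
    assume eq: "\<sigma> k0 = \<tau> k0"
    have mem: "s(k0 := 0) \<in> Sk F k0" if "s \<in> Sk F (Suc k0)" for s
      using that unfolding Sk_def by auto
    have lr: "lin P k0 (s(k0 := 0)) = lin P k0 s" for s
      unfolding lin_def by (rule sum.cong) auto
    have "lin P k0 (\<sigma>(k0 := 0)) = lin P k0 (\<tau>(k0 := 0))"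
      using st(4) eq linS lr by simp
    then have "\<sigma>(k0 := 0) = \<tau>(k0 := 0)" using inj0 mem st(1,2) unfolding inj_on_def by blast
    then have "\<sigma> = \<tau>" using eq by (metis fun_upd_triv fun_upd_upd)
    then show False using st(3) by simp
  qed
  define D where "D = \<sigma> k0 - \<tau> k0"
  have D0: "D \<noteq> 0" using neq D_def by simp
  define \<gamma> where "\<gamma> = (\<lambda>i. if i < k0 then (\<tau> i - \<sigma> i) / D else 0)"
  have DF: "D \<in> F" using st(1,2) sF unfolding Sk_def D_def by (auto intro: sf_diff)
  have \<gamma>S: "\<gamma> \<in> Sk F k0" using st(1,2) sF DF unfolding Sk_def \<gamma>_def by (auto intro!: sf_divide sf_diff)
  have "lin P k0 \<gamma> = (\<Sum>i<k0. (\<tau> i * P i - \<sigma> i * P i)) / D"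
    unfolding lin_def \<gamma>_def by (simp add: sum_divide_distrib left_diff_distrib)
  also have "\<dots> = (lin P k0 \<tau> - lin P k0 \<sigma>) / D" unfolding lin_def by (simp add: sum_subtractf)
  also have "\<dots> = P k0" using st(4) linS[of \<sigma>] linS[of \<tau>] D0 unfolding D_def
    by (simp add: field_simps)
  finally have dk0: "P k0 = lin P k0 \<gamma>" by simp
  have k0pos: "1 \<le> k0"
  proof (rule ccontr)
    assume "\<not> 1 \<le> k0" then have "k0 = 0" by simp
    then show False using dk0 unfolding P_def lin_def by simp
  qed
  define V where "V = lin P k0 ` Sk F k0"
  have Vadd: "x \<in> V \<Longrightarrow> y \<in> V \<Longrightarrow> x + y \<in> V" for x y unfolding V_def using span_add[OF sF] by blast
  have Vsm: "e \<in> F \<Longrightarrow> x \<in> V \<Longrightarrow> e * x \<in> V" for e x unfolding V_def using span_smult[OF sF] by blast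
  have V0: "0 \<in> V" unfolding V_def using span_zero[OF sF] by blast
  have Vsum: "finite A \<Longrightarrow> (\<And>i. i \<in> A \<Longrightarrow> f i \<in> V) \<Longrightarrow> sum f A \<in> V" for A f
    unfolding V_def using span_sum[OF sF] by blast
  have Vpow: "P i \<in> V" if "i \<le> k0" for i
  proof (cases "i < k0")
    case True then show ?thesis unfolding V_def using span_gen[OF sF] by blast
  next
    case False then have "i = k0" using that by simp
    then show ?thesis unfolding V_def using dk0 \<gamma>S by auto
  qed
  have dV: "d * x \<in> V" if "x \<in> V" for x
  proof -
    obtain s where s: "s \<in> Sk F k0" "x = lin P k0 s" using \<open>x \<in> V\<close> unfolding V_def by blast
    have "d * x = (\<Sum>i<k0. s i * P (Suc i))" unfolding s lin_def P_def
      by (simp add: sum_distrib_left mult_ac)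
    also have "\<dots> \<in> V" using s(1) unfolding Sk_def by (intro Vsum Vsm Vpow) auto
    finally show ?thesis .
  qed
  have dpV: "P i * x \<in> V" if "x \<in> V" for i x
    using that proof (induction i)
    case 0 then show ?case by (simp add: P_def)
  next
    case (Suc i) then show ?case using dV[of "P i * x"] by (simp add: P_def mult.assoc)
  qed
  have Vmul: "x * y \<in> V" if "x \<in> V" "y \<in> V" for x y
  proof -
    obtain t where t: "t \<in> Sk F k0" "y = lin P k0 t" using \<open>y \<in> V\<close> unfolding V_def by blast
    have "x * y = (\<Sum>i<k0. t i * (P i * x))" unfolding t lin_def
      by (simp add: sum_distrib_left mult_ac)
    also have "\<dots> \<in> V" using t(1) that(1) unfolding Sk_def by (intro Vsum Vsm dpV) auto
    finally show ?thesis .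
  qed
  have V1: "1 \<in> V" using Vpow[of 0] k0pos by (simp add: P_def)
  have finV: "finite V" by simp
  have Vinv: "inverse x \<in> V" if "x \<in> V" for x
  proof (cases "x = 0")
    case True then show ?thesis using V0 by simp
  next
    case False
    have "(\<lambda>y. x * y) ` V = V"
      by (rule endo_inj_surj[OF finV]) (use Vmul that False in \<open>auto simp: inj_on_def\<close>)
    then obtain y where "y \<in> V" "x * y = 1" using V1 by (metis imageE)
    then have "inverse x = y" using False by (simp add: field_simps)
    then show ?thesis using \<open>y \<in> V\<close> by simp
  qed
  have Vneg: "- x \<in> V" if "x \<in> V" for x
    using Vsm[OF sf_uminus[OF sF sf_1[OF sF]] that] by simp
  have sV: "subfield V" unfolding subfield_def using V0 V1 by (simp add: Vadd Vmul Vneg Vinv)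
  have FV: "F \<subseteq> V" using Vsm[OF _ V1] by auto
  have "d \<in> V" using dV[OF V1] by simp
  then have cV: "c \<in> V" using Vneg dd by force
  have "K \<subseteq> V" unfolding K_def by (rule gen_field_min[OF sV FV cV])
  moreover have "V \<subseteq> K" unfolding V_def by (rule img_sub)
  ultimately have VK: "V = K" by blast
  have "card V = card F ^ k0" unfolding V_def using card_image[OF inj0] card_Sk[OF fin(1)] by simp
  then have "k0 = m" using VK cardK cF2 by simp
  then show ?thesis using k0pos inj0 VK dk0 \<gamma>S unfolding V_def K_def P_def by blast
qed



lemma main_construction:
  fixes F :: "'a::{field,finite} set" and m :: nat and a b :: 'a
  assumes sF: "subfield F"
    and a0: "a \<noteq> 0" and b0: "b \<noteq> 0" and ab: "pt F a \<noteq> pt F b"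
    and dim: "has_dim F (gen_field F (a * inverse b)) m"
  shows "is_ruple_image F (m - 1) (jmap F ` join_line F a b)"
proof -
  define c where "c = a * inverse b"
  define d where "d = - c"
  define P where "P = (\<lambda>i::nat. d ^ i)"
  have pb: "1 \<le> m \<and> inj_on (lin P m) (Sk F m) \<and> lin P m ` Sk F m = gen_field F c
         \<and> (\<exists>\<gamma>\<in>Sk F m. d^m = lin P m \<gamma>)"
    using powers_basis[OF sF _ d_def] dim unfolding c_def P_def by blast
  then have m1: "1 \<le> m" and injP: "inj_on (lin P m) (Sk F m)" by auto
  from pb obtain \<gamma> where \<gamma>S: "\<gamma> \<in> Sk F m" and dm: "d^m = lin P m \<gamma>" by blast
  have \<gamma>F: "\<gamma> x \<in> F" for x using \<gamma>S sf_0[OF sF] unfolding Sk_def by (cases "x < m") auto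
  have cF: "c \<notin> F"
  proof
    assume "c \<in> F"
    moreover have "c \<noteq> 0" using a0 b0 c_def by simp
    moreover have "a = c * b" using b0 c_def by simp
    ultimately have "pt F a = pt F b" using pt_scale[OF sF] by simp
    then show False using ab by simp
  qed
  define e where "e = (\<lambda>k. d^k - (\<Sum>i<k. \<gamma> (m - k + i) * d^i))"
  have E0: "e 0 = 1" unfolding e_def by simp
  have Em: "e m = 0" unfolding e_def using dm unfolding lin_def P_def by simp
  have Erec: "d * e k = e (Suc k) + \<gamma> (m - Suc k)" if "k < m" for k
  proof -
    have "e (Suc k) = d ^ Suc k - (\<gamma> (m - Suc k) + (\<Sum>i<k. \<gamma> (m - Suc k + Suc i) * d ^ Suc i))"
      unfolding e_def by (simp only: sum.lessThan_Suc_shift) simp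
    also have "(\<Sum>i<k. \<gamma> (m - Suc k + Suc i) * d ^ Suc i) = (\<Sum>i<k. \<gamma> (m - k + i) * d ^ Suc i)"
    proof (intro sum.cong refl)
      fix i assume "i \<in> {..<k}"
      have ii: "m - Suc k + Suc i = m - k + i" using that by arith
      then show "\<gamma> (m - Suc k + Suc i) * d ^ Suc i = \<gamma> (m - k + i) * d ^ Suc i" by (subst ii) (rule refl)
    qed
    finally show ?thesis unfolding e_def by (simp add: sum_distrib_left algebra_simps)
  qed
  define W where "W = lin e m ` Sk F m"
  have PW: "P i \<in> W" if "i < m" for i
    using that proof (induction i rule: less_induct)
    case (less i)
    have "P i = e i + (\<Sum>j<i. \<gamma> (m - i + j) * P j)" unfolding e_def P_def by simp
    also have "\<dots> \<in> W" unfolding W_def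
      using less span_gen[OF sF, of i m e] \<gamma>F
      by (intro span_add[OF sF] span_sum[OF sF] span_smult[OF sF]) (auto simp: W_def)
    finally show ?case .
  qed
  have KW: "lin P m ` Sk F m \<subseteq> W"
  proof
    fix x assume "x \<in> lin P m ` Sk F m"
    then obtain s where s: "s \<in> Sk F m" "x = lin P m s" by blast
    have "x = (\<Sum>i<m. s i * P i)" using s unfolding lin_def by simp
    also have "\<dots> \<in> W" unfolding W_def
      by (intro span_sum[OF sF] span_smult[OF sF]) (use s(1) PW in \<open>auto simp: Sk_def W_def\<close>)
    finally show "x \<in> W" .
  qed
  have finS: "finite (Sk F m)" by (rule finite_Sk) simp
  have "card (Sk F m) = card (lin P m ` Sk F m)" using card_image[OF injP] by simp
  also have "\<dots> \<le> card W" using KW by (intro card_mono) auto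
  also have "\<dots> \<le> card (Sk F m)" unfolding W_def using card_image_le[OF finS] by blast
  finally have "card W = card (Sk F m)" by simp
  then have injE: "inj_on (lin e m) (Sk F m)" unfolding W_def by (rule eq_card_imp_inj_on[OF finS])
  define \<phi> where "\<phi> = (\<lambda>\<sigma>. inverse b * lin e m \<sigma>)"
  have cs: "coord_space F (m - 1) = Sk F m" using m1 coord_Sk[of F "m - 1"] by simp
  have lin\<phi>: "F_linear_on F (m - 1) \<phi>"
    unfolding F_linear_on_def \<phi>_def lin_add lin_smult by (simp add: algebra_simps)
  have inj\<phi>: "inj_on \<phi> (coord_space F (m - 1))"
    unfolding cs using injE b0 unfolding inj_on_def \<phi>_def by simp
  have ver: "veronese (m - 1) s t \<in> Sk F m" if "s \<in> F" "t \<in> F" for s t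
    using that m1 unfolding Sk_def veronese_def by (auto intro!: sf_mult sf_power[OF sF] simp: sF)
  have key: "(s - t * d) * lin e m (veronese (m - 1) s t)
      = s ^ m - (\<Sum>k<m. s ^ (m - 1 - k) * t ^ Suc k * \<gamma> (m - Suc k))" for s t
  proof -
    define f where "f = (\<lambda>k. s ^ (m - k) * t ^ k * e k)"
    have trm: "(s - t * d) * (s ^ (m - 1 - k) * t ^ k * e k)
        = f k - f (Suc k) - s ^ (m - 1 - k) * t ^ Suc k * \<gamma> (m - Suc k)" if "k < m" for k
    proof -
      define j where "j = m - Suc k"
      have j: "m - k = Suc j" using that unfolding j_def by arith
      have j2: "m - Suc k = j" "m - 1 - k = j" unfolding j_def by arith+
      have "(s - t * d) * (s ^ j * t ^ k * e k) = s ^ Suc j * t ^ k * e k - s ^ j * t ^ Suc k * (d * e k)"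
        by (simp add: algebra_simps)
      also have "d * e k = e (Suc k) + \<gamma> j" using Erec[OF that] j2 by simp
      finally have "(s - t * d) * (s ^ j * t ^ k * e k)
          = s ^ Suc j * t ^ k * e k - s ^ j * t ^ Suc k * e (Suc k) - s ^ j * t ^ Suc k * \<gamma> j"
        by (simp add: algebra_simps)
      then show ?thesis unfolding f_def j j2 by simp
    qed
    have "lin e m (veronese (m - 1) s t) = (\<Sum>k<m. s ^ (m - 1 - k) * t ^ k * e k)"
      unfolding lin_def veronese_def using m1 by (intro sum.cong) auto
    then have "(s - t * d) * lin e m (veronese (m - 1) s t)
        = (\<Sum>k<m. (s - t * d) * (s ^ (m - 1 - k) * t ^ k * e k))"
      by (simp only: sum_distrib_left)
    also have "\<dots> = (\<Sum>k<m. f k - f (Suc k) - s ^ (m - 1 - k) * t ^ Suc k * \<gamma> (m - Suc k))"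
      by (intro sum.cong refl trm) simp
    also have "\<dots> = (f 0 - f m) - (\<Sum>k<m. s ^ (m - 1 - k) * t ^ Suc k * \<gamma> (m - Suc k))"
      by (simp add: sum_subtractf sum_lessThan_telescope'[of f m, unfolded sum_subtractf])
    also have "f 0 - f m = s ^ m" unfolding f_def using E0 Em by simp
    finally show ?thesis .
  qed
  have main: "t * a + s * b \<noteq> 0 \<and> pt F (inverse (t * a + s * b)) = pt F (\<phi> (veronese (m - 1) s t))"
    if sF': "s \<in> F" and tF: "t \<in> F" and st: "(s, t) \<noteq> (0, 0)" for s t
  proof -
    have xe: "t * a + s * b = b * (s - t * d)" unfolding d_def c_def using b0
      by (simp add: field_simps)
    have y0: "s - t * d \<noteq> 0"
    proof
      assume y: "s - t * d = 0"
      show False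
      proof (cases "t = 0")
        case True then show False using y st by simp
      next
        case False
        then have "c = - (s / t)" using y unfolding d_def by (simp add: field_simps eq_neg_iff_add_eq_0 add.commute)
        moreover have "- (s / t) \<in> F" using sF' tF sF by (intro sf_uminus sf_divide)
        ultimately show False using cF by simp
      qed
    qed
    define v where "v = veronese (m - 1) s t"
    have vS: "v \<in> Sk F m" unfolding v_def using ver sF' tF by simp
    have w0: "lin e m v \<noteq> 0"
    proof
      assume "lin e m v = 0"
      then have "lin e m v = lin e m (\<lambda>i. 0)" by (simp add: lin_zero)
      then have v0: "v = (\<lambda>i. 0)" using injE vS Sk_zero[OF sF] unfolding inj_on_def by blast
      show False
      proof (cases "s = 0")
        case False
        have "v 0 = s ^ (m - 1)" unfolding v_def veronese_def by simp
        then show False using v0 False by simp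
      next
        case True
        then have "t \<noteq> 0" using st by simp
        have "v (m - 1) = t ^ (m - 1)" unfolding v_def veronese_def by simp
        then show False using v0 \<open>t \<noteq> 0\<close> by simp
      qed
    qed
    define N where "N = (s - t * d) * lin e m v"
    have N0: "N \<noteq> 0" using y0 w0 N_def by simp
    have NF: "N \<in> F" unfolding N_def v_def key using sF' tF \<gamma>F
      by (intro sf_diff[OF sF] sf_power[OF sF] subfield_sum[OF sF] sf_mult[OF sF]) auto
    have "inverse (t * a + s * b) = inverse N * \<phi> v"
      unfolding xe N_def \<phi>_def using y0 w0 b0 by (simp add: field_simps)
    moreover have "pt F (inverse N * \<phi> v) = pt F (\<phi> v)"
      using pt_scale[OF sF] NF N0 sf_inverse[OF sF] by simp
    ultimately show ?thesis using xe y0 b0 v_def by simp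
  qed
  have "jmap F ` join_line F a b = {pt F (\<phi> (veronese (m - 1) t0 t1)) | t0 t1. t0 \<in> F \<and> t1 \<in> F \<and> (t0, t1) \<noteq> (0, 0)}"
  proof (intro equalityI subsetI)
    fix P assume "P \<in> jmap F ` join_line F a b"
    then obtain x u v where x: "x \<noteq> 0" "u \<in> F" "v \<in> F" "x = u * a + v * b" "P = jmap F (pt F x)"
      unfolding join_line_def by blast
    have "(v, u) \<noteq> (0, 0)" using x by auto
    then have "P = pt F (\<phi> (veronese (m - 1) v u))"
      using main[of v u] x jmap_pt[OF sF] by simp
    then show "P \<in> {pt F (\<phi> (veronese (m - 1) t0 t1)) | t0 t1. t0 \<in> F \<and> t1 \<in> F \<and> (t0, t1) \<noteq> (0, 0)}"
      using x \<open>(v, u) \<noteq> (0, 0)\<close> by blast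
  next
    fix P assume "P \<in> {pt F (\<phi> (veronese (m - 1) t0 t1)) | t0 t1. t0 \<in> F \<and> t1 \<in> F \<and> (t0, t1) \<noteq> (0, 0)}"
    then obtain s t where st: "s \<in> F" "t \<in> F" "(s, t) \<noteq> (0, 0)" "P = pt F (\<phi> (veronese (m - 1) s t))"
      by blast
    have m: "t * a + s * b \<noteq> 0" "pt F (inverse (t * a + s * b)) = P" using main[OF st(1-3)] st(4) by auto
    have "pt F (t * a + s * b) \<in> join_line F a b" unfolding join_line_def using m st by blast
    moreover have "jmap F (pt F (t * a + s * b)) = P" using jmap_pt[OF sF m(1)] m(2) by simp
    ultimately show "P \<in> jmap F ` join_line F a b" by blast
  qed
  then show ?thesis unfolding is_ruple_image_def using lin\<phi> inj\<phi> by blast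
qed


theorem mainTheorem1:
  fixes F :: "'a::{field,finite} set" and n m :: nat and a b :: 'a
  assumes "subfield F"
    and "has_dim F UNIV n" and "n \<ge> 2"
    and "a \<noteq> 0" and "b \<noteq> 0" and "pt F a \<noteq> pt F b"
    and "has_dim F (gen_field F (a * inverse b)) m"
  shows "is_ruple_image F (m - 1) (jmap F ` join_line F a b)"
  using main_construction[OF assms(1) assms(4) assms(5) assms(6) assms(7)] .

end
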